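(* Let $c\in V$ be tight and let $x_1,x_2\ge 0$. Then (1) $\operatorname{proj}_X(\operatorname{proj}_X(c,x_1),x_2)=\operatorname{proj}_X(c,\min\{x_1,x_2\})$, and (2) $\operatorname{shrink}_X(\operatorname{shrink}_X(c,x_1),x_2)=\operatorname{shrink}_X(c,x_1+x_2)$.
   Context: $V$ is a finite dimensional real vector space with a positive definite symmetric bilinear form $\langle\cdot,\cdot\rangle$, $\|v\|_2=\sqrt{\langle v,v\rangle}$; $\|\cdot\|_X$ is a norm on $V$ with dual norm $\|v\|_Y=\max\{\langle v,w\rangle:\|w\|_X=1\}$. For $x\ge0$, $B_X(x)=\{v:\|v\|_X\le x\}$, $\operatorname{proj}_X(c,x)$ is the unique point of $B_X(x)$ closest to $c$ in $\|\cdot\|_2$, and $\operatorname{shrink}_X(c,x)=c-\operatorname{proj}_X(c,x)$. For norms $\|\cdot\|_P,\|\cdot\|_Q$ (among $X,Y,2$), $c=a+b$ is a $PQ$-decomposition if for every decomposition $c=a'+b'$: $\|a'\|_P>\|a\|_P$, or $\|b'\|_Q>\|b\|_Q$, or $(\|a'\|_P,\|b'\|_Q)=(\|a\|_P,\|b\|_Q)$. The vector $c$ is tight if every $X2$-decomposition of $c$ is an $XY$-decomposition. *)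

theory Defs
  imports "HOL-Analysis.Analysis"
begin

text \<open>V is modelled by a type of class euclidean_space (finite-dimensional real
inner product space; inner product = the positive definite form, norm = the 2-norm).\<close>

definition is_norm :: "('a::real_vector \<Rightarrow> real) \<Rightarrow> bool" where
  "is_norm N \<longleftrightarrow> (\<forall>v w. N (v + w) \<le> N v + N w) \<and> (\<forall>a v. N (a *\<^sub>R v) = \<bar>a\<bar> * N v)
     \<and> (\<forall>v. N v = 0 \<longleftrightarrow> v = 0)"

definition dual_norm :: "('a::real_inner \<Rightarrow> real) \<Rightarrow> 'a \<Rightarrow> real" where
  "dual_norm N v = Sup {inner v w | w. N w = 1}"

definition ballX :: "('a::real_vector \<Rightarrow> real) \<Rightarrow> real \<Rightarrow> 'a set" where
  "ballX N x = {v. N v \<le> x}"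

definition projX :: "('a::real_inner \<Rightarrow> real) \<Rightarrow> 'a \<Rightarrow> real \<Rightarrow> 'a" where
  "projX N c x = (THE p. p \<in> ballX N x \<and> (\<forall>q\<in>ballX N x. norm (c - p) \<le> norm (c - q)))"

definition shrinkX :: "('a::real_inner \<Rightarrow> real) \<Rightarrow> 'a \<Rightarrow> real \<Rightarrow> 'a" where
  "shrinkX N c x = c - projX N c x"

definition is_decomp :: "('a::real_vector \<Rightarrow> real) \<Rightarrow> ('a \<Rightarrow> real) \<Rightarrow> 'a \<Rightarrow> 'a \<Rightarrow> 'a \<Rightarrow> bool" where
  "is_decomp P Q c a b \<longleftrightarrow> c = a + b \<and>
     (\<forall>a' b'. c = a' + b' \<longrightarrow> P a' > P a \<or> Q b' > Q b \<or> (P a' = P a \<and> Q b' = Q b))"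

definition tight :: "('a::real_inner \<Rightarrow> real) \<Rightarrow> 'a \<Rightarrow> bool" where
  "tight N c \<longleftrightarrow> (\<forall>a b. is_decomp N norm c a b \<longrightarrow> is_decomp N (dual_norm N) c a b)"

end

theory Submission
  imports Defs
begin

locale nx =
  fixes N :: "'a::euclidean_space \<Rightarrow> real"
  assumes isn: "is_norm N"
begin

lemma tri: "N (v + w) \<le> N v + N w" using isn unfolding is_norm_def by blast
lemma hom: "N (a *\<^sub>R v) = \<bar>a\<bar> * N v" using isn unfolding is_norm_def by blast
lemma zero_iff: "N v = 0 \<longleftrightarrow> v = 0" using isn unfolding is_norm_def by blast
lemma N0[simp]: "N 0 = 0" using zero_iff by blast
lemma Nneg: "N (- v) = N v" using hom[of "-1" v] by simp
lemma Nge0: "N v \<ge> 0"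
proof -
  have "N (v + - v) \<le> N v + N (-v)" by (rule tri)
  thus ?thesis using Nneg[of v] by simp
qed
lemma Ndiff: "N v - N w \<le> N (v - w)"
  using tri[of "v - w" w] by simp

lemma Nsum: "finite S \<Longrightarrow> N (\<Sum>b\<in>S. f b) \<le> (\<Sum>b\<in>S. N (f b))"
proof (induction S rule: finite_induct)
  case empty then show ?case by simp
next
  case (insert x F)
  then show ?case using tri[of "f x" "sum f F"] by simp
qed

definition CN where "CN = (\<Sum>b\<in>(Basis::'a set). N b)"

lemma Nupper: "N v \<le> CN * norm v"
proof -
  have "N v = N (\<Sum>b\<in>Basis. (inner v b) *\<^sub>R b)" by (simp add: euclidean_representation)
  also have "\<dots> \<le> (\<Sum>b\<in>Basis. N ((inner v b) *\<^sub>R b))" by (rule Nsum) simp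
  also have "\<dots> = (\<Sum>b\<in>Basis. \<bar>inner v b\<bar> * N b)" by (simp add: hom)
  also have "\<dots> \<le> (\<Sum>b\<in>Basis. norm v * N b)"
    by (rule sum_mono, rule mult_right_mono) (auto simp: Basis_le_norm Nge0)
  finally show ?thesis by (simp add: CN_def sum_distrib_left mult.commute)
qed

lemma Nlip: "\<bar>N v - N w\<bar> \<le> CN * norm (v - w)"
proof -
  have "N v - N w \<le> CN * norm (v - w)" using Ndiff[of v w] Nupper[of "v - w"] by linarith
  moreover have "N w - N v \<le> CN * norm (v - w)" using Ndiff[of w v] Nupper[of "w - v"]
    by (simp add: norm_minus_commute)
  ultimately show ?thesis by linarith
qed

lemma Ncont: "continuous_on UNIV N"
proof (rule continuous_onI)
  fix x and e :: real assume e: "e > 0"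
  have C: "CN \<ge> 0" unfolding CN_def by (simp add: Nge0 sum_nonneg)
  show "\<exists>d>0. \<forall>x'\<in>UNIV. dist x' x < d \<longrightarrow> dist (N x') (N x) \<le> e"
  proof (intro exI[of _ "e / (CN + 1)"] conjI ballI impI)
    show "e / (CN + 1) > 0" using e C by simp
    fix x' assume "dist x' x < e / (CN + 1)"
    hence "norm (x' - x) * (CN + 1) < e" using C by (simp add: dist_norm field_simps)
    moreover have "dist (N x') (N x) \<le> CN * norm (x' - x)" using Nlip[of x' x] by (simp add: dist_real_def)
    moreover have "CN * norm (x' - x) \<le> norm (x' - x) * (CN + 1)" by (simp add: algebra_simps)
    ultimately show "dist (N x') (N x) \<le> e" by linarith
  qed
qed

lemma ball_closed: "closed (ballX N s)"
  unfolding ballX_def by (rule closed_Collect_le[OF Ncont continuous_on_const])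

lemma ball_convex: "convex (ballX N s)"
  unfolding ballX_def convex_def
proof (intro allI impI ballI, clarsimp)
  fix x y and u v :: real assume h: "N x \<le> s" "N y \<le> s" "0 \<le> u" "0 \<le> v" "u + v = 1"
  have "N (u *\<^sub>R x + v *\<^sub>R y) \<le> N (u *\<^sub>R x) + N (v *\<^sub>R y)" by (rule tri)
  also have "\<dots> = u * N x + v * N y" using h by (simp add: hom)
  also have "\<dots> \<le> u * s + v * s" using h by (intro add_mono mult_left_mono) auto
  also have "u * s + v * s = s" using h(5) by (metis distrib_right mult_1)
  finally show "N (u *\<^sub>R x + v *\<^sub>R y) \<le> s" .
qed

lemma ball_ne: "s \<ge> 0 \<Longrightarrow> ballX N s \<noteq> {}"
  unfolding ballX_def by (rule ccontr) (auto dest: spec[of _ 0])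

lemma lower: "\<exists>m>0. \<forall>v. m * norm v \<le> N v"
proof -
  obtain b :: 'a where b: "b \<in> Basis" using nonempty_Basis by blast
  have ne: "sphere (0::'a) 1 \<noteq> {}" using b by (auto simp: sphere_def intro!: exI[of _ b])
  obtain x0 where x0: "x0 \<in> sphere (0::'a) 1" "\<forall>y\<in>sphere 0 1. N x0 \<le> N y"
    using continuous_attains_inf[OF compact_sphere ne continuous_on_subset[OF Ncont]] by blast
  have "x0 \<noteq> 0" using x0 by auto
  hence pos: "N x0 > 0" using Nge0[of x0] zero_iff[of x0] by linarith
  show ?thesis
  proof (intro exI[of _ "N x0"] conjI allI pos)
    fix v :: 'a
    show "N x0 * norm v \<le> N v"
    proof (cases "v = 0")
      case True then show ?thesis by simp
    next
      case False
      hence "(1 / norm v) *\<^sub>R v \<in> sphere 0 1" by auto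
      hence "N x0 \<le> N ((1 / norm v) *\<^sub>R v)" using x0 by blast
      also have "\<dots> = N v / norm v" by (simp add: hom)
      finally show ?thesis using False by (simp add: field_simps)
    qed
  qed
qed

abbreviation D where "D \<equiv> dual_norm N"

lemma du_ne: "\<exists>w. N w = 1"
proof -
  obtain b :: 'a where b: "b \<in> Basis" using nonempty_Basis by blast
  hence "b \<noteq> 0" by auto
  hence "N b > 0" using Nge0[of b] zero_iff[of b] by linarith
  hence "N ((1 / N b) *\<^sub>R b) = 1" by (simp add: hom)
  thus ?thesis by blast
qed

lemma du_bdd: "bdd_above {inner v w | w. N w = 1}"
proof -
  obtain m where m: "m > 0" "\<forall>v. m * norm v \<le> N v" using lower by blast
  show ?thesis unfolding bdd_above_def
  proof (intro exI[of _ "norm v / m"] ballI, clarsimp)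
    fix w assume "N w = 1"
    hence "norm w \<le> 1 / m" using m spec[OF m(2), of w] by (simp add: field_simps)
    hence "norm v * norm w \<le> norm v * (1 / m)" by (intro mult_left_mono) auto
    moreover have "inner v w \<le> norm v * norm w" using norm_cauchy_schwarz by blast
    ultimately show "inner v w \<le> norm v / m" by simp
  qed
qed

lemma du_upper: "N w = 1 \<Longrightarrow> inner v w \<le> D v"
  unfolding dual_norm_def by (rule cSup_upper[OF _ du_bdd]) blast

lemma du_least: "(\<And>w. N w = 1 \<Longrightarrow> inner v w \<le> K) \<Longrightarrow> D v \<le> K"
  unfolding dual_norm_def using du_ne by (intro cSup_least) auto

lemma du_ge0: "D v \<ge> 0"
proof -
  obtain w where w: "N w = 1" using du_ne by blast
  have "inner v w \<le> D v" using du_upper[OF w] .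
  moreover have "inner v (- w) \<le> D v" using du_upper[of "- w"] w Nneg by simp
  ultimately show ?thesis by simp
qed

lemma du_zero[simp]: "D 0 = 0"
  using du_least[of 0 0] du_ge0[of 0] by simp

lemma du_ineq: "inner v w \<le> N w * D v"
proof (cases "w = 0")
  case True then show ?thesis by simp
next
  case False
  hence pos: "N w > 0" using Nge0[of w] zero_iff[of w] by linarith
  hence "N ((1 / N w) *\<^sub>R w) = 1" by (simp add: hom)
  hence "inner v ((1 / N w) *\<^sub>R w) \<le> D v" by (rule du_upper)
  thus ?thesis using pos by (simp add: field_simps)
qed

lemma du_ineq': "inner w v \<le> N w * D v"
  using du_ineq by (simp add: inner_commute)

lemma du_tri: "D (v + u) \<le> D v + D u"
proof (rule du_least)
  fix w assume w: "N w = 1"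
  show "inner (v + u) w \<le> D v + D u"
    using du_upper[OF w, of v] du_upper[OF w, of u] by (simp add: inner_add_left)
qed

abbreviation P where "P \<equiv> projX N"
abbreviation S where "S \<equiv> shrinkX N"

lemma proj_cp: assumes "s \<ge> 0" shows "P c s = closest_point (ballX N s) c"
  unfolding projX_def
proof (rule the_equality)
  show "closest_point (ballX N s) c \<in> ballX N s \<and>
    (\<forall>q\<in>ballX N s. norm (c - closest_point (ballX N s) c) \<le> norm (c - q))"
    using closest_point_in_set[OF ball_closed ball_ne[OF assms]] closest_point_le[OF ball_closed]
    by (auto simp: dist_norm)
next
  fix p assume "p \<in> ballX N s \<and> (\<forall>q\<in>ballX N s. norm (c - p) \<le> norm (c - q))"
  thus "p = closest_point (ballX N s) c"
    by (intro closest_point_unique[OF ball_convex ball_closed]) (auto simp: dist_norm)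
qed

lemma proj_in: "s \<ge> 0 \<Longrightarrow> N (P c s) \<le> s"
  using proj_cp closest_point_in_set[OF ball_closed ball_ne] by (auto simp: ballX_def)

lemma proj_min: "s \<ge> 0 \<Longrightarrow> N q \<le> s \<Longrightarrow> norm (c - P c s) \<le> norm (c - q)"
  using proj_cp closest_point_le[OF ball_closed, of q s c] by (auto simp: ballX_def dist_norm)

lemma proj_uniq: "s \<ge> 0 \<Longrightarrow> N p \<le> s \<Longrightarrow> (\<And>q. N q \<le> s \<Longrightarrow> norm (c - p) \<le> norm (c - q)) \<Longrightarrow> P c s = p"
  using proj_cp closest_point_unique[OF ball_convex ball_closed, of p s c]
  by (auto simp: ballX_def dist_norm)

lemma proj_var: "s \<ge> 0 \<Longrightarrow> N q \<le> s \<Longrightarrow> inner (c - P c s) (q - P c s) \<le> 0"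
  using proj_cp closest_point_dot[OF ball_convex ball_closed, of q s c] by (auto simp: ballX_def)

lemma proj_self: "s \<ge> 0 \<Longrightarrow> N c \<le> s \<Longrightarrow> P c s = c"
  by (rule proj_uniq) auto

lemma proj_zero: "P c 0 = 0"
  using proj_in[of 0 c] zero_iff Nge0 by (metis order.antisym)

lemma shrink_zero: "S c 0 = c"
  by (simp add: shrinkX_def proj_zero)

lemma proj_inner: assumes "s \<ge> 0" shows "s * D (S c s) \<le> inner (S c s) (P c s)"
proof (cases "s = 0")
  case True then show ?thesis by (simp add: proj_zero)
next
  case False
  hence sp: "s > 0" using assms by simp
  have "D (S c s) \<le> inner (S c s) (P c s) / s"
  proof (rule du_least)
    fix w assume w: "N w = 1"
    have "N (s *\<^sub>R w) \<le> s" using w sp by (simp add: hom)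
    hence "inner (c - P c s) (s *\<^sub>R w - P c s) \<le> 0" by (rule proj_var[OF assms])
    hence "s * inner (S c s) w \<le> inner (S c s) (P c s)"
      by (simp add: shrinkX_def inner_diff_right)
    thus "inner (S c s) w \<le> inner (S c s) (P c s) / s" using sp by (simp add: field_simps)
  qed
  thus ?thesis using sp by (simp add: field_simps)
qed

lemma proj_interior: assumes "s \<ge> 0" "N (P c s) < s" shows "P c s = c"
proof (rule ccontr)
  assume ne: "P c s \<noteq> c"
  let ?r = "c - P c s"
  have nr: "N ?r > 0" using ne zero_iff[of ?r] Nge0[of ?r] by auto
  define e where "e = min 1 ((s - N (P c s)) / N ?r)"
  have e: "e > 0" "e * N ?r \<le> s - N (P c s)" using nr assms
    by (auto simp: e_def min_def field_simps)
  have "N (P c s + e *\<^sub>R ?r) \<le> N (P c s) + N (e *\<^sub>R ?r)" by (rule tri)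
  also have "\<dots> = N (P c s) + e * N ?r" using e by (simp add: hom)
  finally have "N (P c s + e *\<^sub>R ?r) \<le> s" using e by linarith
  hence "inner ?r ((P c s + e *\<^sub>R ?r) - P c s) \<le> 0" by (rule proj_var[OF assms(1)])
  hence "e * inner ?r ?r \<le> 0" by simp
  hence "inner ?r ?r \<le> 0" using e by (simp add: mult_le_0_iff)
  hence "?r = 0" by (metis inner_gt_zero_iff not_le)
  thus False using ne by simp
qed

lemma X2: assumes "s \<ge> 0" shows "is_decomp N norm c (P c s) (S c s)"
  unfolding is_decomp_def
proof (intro conjI allI impI)
  show "c = P c s + S c s" by (simp add: shrinkX_def)
  fix a b assume ab: "c = a + b"
  show "N (P c s) < N a \<or> norm (S c s) < norm b \<or> N a = N (P c s) \<and> norm b = norm (S c s)"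
  proof (cases "N (P c s) < N a")
    case True then show ?thesis by blast
  next
    case False
    hence as: "N a \<le> s" using proj_in[OF assms, of c] by linarith
    have le: "norm (S c s) \<le> norm b" using proj_min[OF assms as, of c] ab by (simp add: shrinkX_def)
    show ?thesis
    proof (cases "norm (S c s) < norm b")
      case True then show ?thesis by blast
    next
      case False
      hence eq: "norm b = norm (S c s)" using le by simp
      have "P c s = a"
      proof (rule proj_uniq[OF assms as])
        fix q assume "N q \<le> s"
        thus "norm (c - a) \<le> norm (c - q)" using proj_min[OF assms, of q c] eq ab
          by (simp add: shrinkX_def)
      qed
      thus ?thesis using eq by simp
    qed
  qed
qed

lemma XYT: assumes t: "tight N c" and s: "s \<ge> 0" and ab: "c = a + b" and as: "N a \<le> s"
  shows "D (S c s) \<le> D b"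
proof (cases "N (P c s) < s")
  case True
  hence "S c s = 0" using proj_interior[OF s True] by (simp add: shrinkX_def)
  thus ?thesis using du_ge0[of b] by simp
next
  case False
  hence eqs: "N (P c s) = s" using proj_in[OF s, of c] by linarith
  have "is_decomp N D c (P c s) (S c s)" using t X2[OF s] unfolding tight_def by blast
  hence "N (P c s) < N a \<or> D (S c s) < D b \<or> N a = N (P c s) \<and> D b = D (S c s)"
    using ab unfolding is_decomp_def by blast
  thus ?thesis using eqs as by auto
qed

lemma F_dlow: assumes "0 \<le> s" "s \<le> s'"
  shows "(s' - s) * D (S w s') \<le> inner (P w s' - P w s) (S w s')"
proof (cases "s = s'")
  case True then show ?thesis by simp
next
  case False
  hence h: "s' - s > 0" using assms by simp
  have "D (S w s') \<le> inner (P w s' - P w s) (S w s') / (s' - s)"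
  proof (rule du_least)
    fix z assume z: "N z = 1"
    have "N (P w s + (s' - s) *\<^sub>R z) \<le> N (P w s) + N ((s' - s) *\<^sub>R z)" by (rule tri)
    also have "\<dots> \<le> s + (s' - s)" using proj_in[OF assms(1), of w] z h by (simp add: hom)
    finally have "N (P w s + (s' - s) *\<^sub>R z) \<le> s'" by simp
    hence "inner (w - P w s') ((P w s + (s' - s) *\<^sub>R z) - P w s') \<le> 0"
      by (rule proj_var[of s', OF order.trans[OF assms]])
    hence "(s' - s) * inner (S w s') z \<le> inner (P w s' - P w s) (S w s')"
      by (simp add: shrinkX_def inner_diff_right inner_add_right inner_diff_left inner_commute algebra_simps)
    thus "inner (S w s') z \<le> inner (P w s' - P w s) (S w s') / (s' - s)" using h by (simp add: field_simps)
  qed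
  thus ?thesis using h by (simp add: field_simps)
qed

lemma F_dup: assumes "0 \<le> s" "s \<le> s'"
  shows "inner (P w s' - P w s) (S w s) \<le> (s' - s) * D (S w s)"
proof -
  have "inner (P w s') (S w s) \<le> N (P w s') * D (S w s)" by (rule du_ineq')
  also have "\<dots> \<le> s' * D (S w s)" using proj_in[of s' w] assms du_ge0 by (intro mult_right_mono) auto
  finally have "inner (P w s') (S w s) \<le> s' * D (S w s)" .
  moreover have "s * D (S w s) \<le> inner (S w s) (P w s)" by (rule proj_inner[OF assms(1)])
  ultimately show ?thesis by (simp add: inner_diff_left inner_commute algebra_simps)
qed

lemma sq_split: "inner (a + d) (a + d) = inner a a + 2 * inner d a + inner d (d::'a)"
  by (simp add: inner_add_left inner_add_right inner_commute)

lemma F_low: assumes "0 \<le> s" "s \<le> s'"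
  shows "(s' - s) * D (S w s') \<le> inner (S w s) (S w s) / 2 - inner (S w s') (S w s') / 2"
proof -
  have e: "S w s = S w s' + (P w s' - P w s)" by (simp add: shrinkX_def)
  have "inner (S w s) (S w s) \<ge> inner (S w s') (S w s') + 2 * inner (P w s' - P w s) (S w s')"
    unfolding e sq_split by simp
  thus ?thesis using F_dlow[OF assms, of w] by linarith
qed

lemma F_up: assumes "0 \<le> s" "s \<le> s'"
  shows "inner (S w s) (S w s) / 2 - inner (S w s') (S w s') / 2 \<le> (s' - s) * D (S w s)"
proof -
  define d where "d = P w s' - P w s"
  have e: "S w s' = S w s + - d" by (simp add: shrinkX_def d_def)
  have "inner (S w s') (S w s') \<ge> inner (S w s) (S w s) - 2 * inner d (S w s)"
    unfolding e sq_split by simp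
  hence "inner (S w s') (S w s') \<ge> inner (S w s) (S w s) - 2 * inner (P w s' - P w s) (S w s)"
    by (simp add: d_def)
  thus ?thesis using F_dup[OF assms, of w] by linarith
qed

lemma lim_arg: assumes "K \<ge> 0" "\<And>n::nat. n > 0 \<Longrightarrow> a \<le> b + K / real n" shows "a \<le> (b::real)"
proof (rule ccontr)
  assume "\<not> a \<le> b"
  hence g: "a - b > 0" by simp
  obtain n :: nat where n: "real n > K / (a - b)" using reals_Archimedean2 by blast
  have "K / (a - b) \<ge> 0" using assms g by simp
  hence np: "n > 0" using n by linarith
  have "K < real n * (a - b)" using n g by (simp add: field_simps)
  hence "K / real n < a - b" using np by (simp add: field_simps)
  thus False using assms(2)[OF np] by linarith
qed

lemma part2: assumes t: "tight N c" and x1: "x1 \<ge> 0" and tt: "t \<ge> 0"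
  shows "S (S c x1) t = S c (x1 + t)"
proof -
  define v where "v = S c x1"
  define A where "A \<tau> = inner (S v \<tau>) (S v \<tau>) / 2" for \<tau>
  define B where "B s = inner (S c s) (S c s) / 2" for s
  define L where "L s = D (S c s)" for s
  have key: "A t \<le> B (x1 + t)"
  proof (rule lim_arg[of "t * L x1"])
    show "0 \<le> t * L x1" using tt du_ge0 by (simp add: L_def)
    fix n :: nat assume n: "n > 0"
    define h where "h = t / real n"
    have h0: "h \<ge> 0" using tt by (simp add: h_def)
    have ind: "k \<le> n \<longrightarrow> h * (L (x1 + real k * h) - L x1) \<le> (A 0 - A (real k * h)) - (B x1 - B (x1 + real k * h))" for k
    proof (induction k)
      case 0 then show ?case by simp
    next
      case (Suc k)
      show ?case
      proof
        assume kn: "Suc k \<le> n"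
        define \<tau> where "\<tau> = real k * h"
        have tau: "\<tau> \<ge> 0" using h0 by (simp add: \<tau>_def)
        have eq: "real (Suc k) * h = \<tau> + h" by (simp add: \<tau>_def algebra_simps)
        have a1: "h * D (S v (\<tau> + h)) \<le> A \<tau> - A (\<tau> + h)"
          using F_low[OF tau, of "\<tau> + h" v] h0 by (simp add: A_def)
        have a2: "L (x1 + (\<tau> + h)) \<le> D (S v (\<tau> + h))"
          unfolding L_def
        proof (rule XYT[OF t _ _ ])
          show "0 \<le> x1 + (\<tau> + h)" using x1 tau h0 by simp
          show "c = (P c x1 + P v (\<tau> + h)) + S v (\<tau> + h)" by (simp add: v_def shrinkX_def)
          have "N (P c x1 + P v (\<tau> + h)) \<le> N (P c x1) + N (P v (\<tau> + h))" by (rule tri)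
          also have "\<dots> \<le> x1 + (\<tau> + h)" using proj_in[OF x1, of c] proj_in[of "\<tau> + h" v] tau h0 by simp
          finally show "N (P c x1 + P v (\<tau> + h)) \<le> x1 + (\<tau> + h)" .
        qed
        have a3: "B (x1 + \<tau>) - B (x1 + (\<tau> + h)) \<le> h * L (x1 + \<tau>)"
          using F_up[of "x1 + \<tau>" "x1 + (\<tau> + h)" c] x1 tau h0 by (simp add: B_def L_def)
        have IH: "h * (L (x1 + \<tau>) - L x1) \<le> (A 0 - A \<tau>) - (B x1 - B (x1 + \<tau>))"
          using Suc.IH kn by (simp add: \<tau>_def)
        have "h * L (x1 + (\<tau> + h)) \<le> h * D (S v (\<tau> + h))" using a2 h0 by (rule mult_left_mono)
        with a1 a3 IH show "h * (L (x1 + real (Suc k) * h) - L x1) \<le> (A 0 - A (real (Suc k) * h)) - (B x1 - B (x1 + real (Suc k) * h))"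
          unfolding eq by (simp add: algebra_simps)
      qed
    qed
    have nh: "real n * h = t" using n by (simp add: h_def)
    have "A 0 = B x1" by (simp add: A_def B_def shrink_zero v_def)
    with ind[of n] nh have "h * (L (x1 + t) - L x1) \<le> B (x1 + t) - A t" by simp
    moreover have "h * L (x1 + t) \<ge> 0" using h0 du_ge0 by (simp add: L_def)
    ultimately have "A t \<le> B (x1 + t) + h * L x1" by (simp add: algebra_simps)
    thus "A t \<le> B (x1 + t) + t * L x1 / real n" by (simp add: h_def)
  qed
  define a' where "a' = P c x1 + P v t"
  have ca: "c - a' = S v t" by (simp add: a'_def v_def shrinkX_def)
  have "P c (x1 + t) = a'"
  proof (rule proj_uniq)
    show "0 \<le> x1 + t" using x1 tt by simp
    have "N a' \<le> N (P c x1) + N (P v t)" unfolding a'_def by (rule tri)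
    also have "\<dots> \<le> x1 + t" using proj_in[OF x1, of c] proj_in[OF tt, of v] by simp
    finally show "N a' \<le> x1 + t" .
    fix q assume q: "N q \<le> x1 + t"
    have "norm (c - a') \<le> norm (S c (x1 + t))" unfolding ca norm_le using key by (simp add: A_def B_def)
    also have "\<dots> \<le> norm (c - q)" using proj_min[OF _ q, of c] x1 tt by (simp add: shrinkX_def)
    finally show "norm (c - a') \<le> norm (c - q)" .
  qed
  thus ?thesis using ca by (simp add: shrinkX_def v_def)
qed

lemma compat: assumes t: "tight N c" and s: "0 \<le> s" and sy: "s \<le> y"
  shows "s * D (S c y) \<le> inner (P c s) (S c y)"
proof -
  have y: "y \<ge> 0" using s sy by simp
  define e where "e = P (S c s) (y - s)"
  have "S (S c s) (y - s) = S c y" using part2[OF t s, of "y - s"] sy by simp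
  hence r: "S c y = S c s - e" by (simp add: shrinkX_def e_def)
  hence p: "P c s = P c y - e" by (simp add: shrinkX_def algebra_simps)
  have "inner e (S c y) \<le> N e * D (S c y)" by (rule du_ineq')
  also have "\<dots> \<le> (y - s) * D (S c y)" using proj_in[of "y - s" "S c s"] sy du_ge0
    by (intro mult_right_mono) (auto simp: e_def)
  finally have "inner e (S c y) \<le> (y - s) * D (S c y)" .
  moreover have "y * D (S c y) \<le> inner (S c y) (P c y)" by (rule proj_inner[OF y])
  ultimately show ?thesis unfolding p by (simp add: inner_diff_left inner_commute algebra_simps)
qed

lemma part1: assumes t: "tight N c" and x2: "x2 \<ge> 0" and lt: "x2 < x1"
  shows "P (P c x1) x2 = P c x2"
proof -
  have x1: "x1 \<ge> 0" using x2 lt by simp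
  define u where "u = P c x1"
  have uc: "u = c - S c x1" by (simp add: u_def shrinkX_def)
  define E where "E s = inner (u - P c s) (u - P c s) / 2" for s
  define Dd where "Dd s = inner (S u s) (S u s) / 2" for s
  define L where "L s = D (S c s)" for s
  define M where "M s = D (S u s)" for s
  have key: "E x2 \<le> Dd x2"
  proof (rule lim_arg[of "(x1 - x2) * L x2"])
    show "0 \<le> (x1 - x2) * L x2" using lt du_ge0 by (simp add: L_def)
    fix n :: nat assume n: "n > 0"
    define h where "h = (x1 - x2) / real n"
    have h0: "h \<ge> 0" using lt by (simp add: h_def)
    have nh: "real n * h = x1 - x2" using n by (simp add: h_def)
    have ind: "k \<le> n \<longrightarrow> (E x2 - E (x2 + real k * h)) - (Dd x2 - Dd (x2 + real k * h)) \<le> h * (L x2 - L (x2 + real k * h))" for k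
    proof (induction k)
      case 0 then show ?case by simp
    next
      case (Suc k)
      show ?case
      proof
        assume kn: "Suc k \<le> n"
        define \<sigma> where "\<sigma> = x2 + real k * h"
        have sg: "\<sigma> \<ge> 0" using h0 x2 by (simp add: \<sigma>_def)
        have eq: "x2 + real (Suc k) * h = \<sigma> + h" by (simp add: \<sigma>_def algebra_simps)
        have "real (Suc k) * h \<le> real n * h" using kn h0 by (intro mult_right_mono) auto
        hence sx: "\<sigma> + h \<le> x1" using nh eq by simp
        define d where "d = P c (\<sigma> + h) - P c \<sigma>"
        have b1: "E \<sigma> - E (\<sigma> + h) \<le> inner d (S c \<sigma> - S c x1)"
        proof -
          have e1: "u - P c (\<sigma> + h) = (u - P c \<sigma>) + - d" by (simp add: d_def)
          have "inner (u - P c (\<sigma> + h)) (u - P c (\<sigma> + h)) \<ge> inner (u - P c \<sigma>) (u - P c \<sigma>) - 2 * inner d (u - P c \<sigma>)"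
            unfolding e1 sq_split by simp
          moreover have "u - P c \<sigma> = S c \<sigma> - S c x1" by (simp add: uc shrinkX_def)
          ultimately show ?thesis by (simp add: E_def)
        qed
        have b2: "inner d (S c \<sigma>) \<le> h * L \<sigma>"
          using F_dup[OF sg, of "\<sigma> + h" c] h0 by (simp add: d_def L_def)
        have b3: "h * L x1 \<le> inner d (S c x1)"
        proof -
          have "(\<sigma> + h) * D (S c x1) \<le> inner (P c (\<sigma> + h)) (S c x1)"
            using compat[OF t _ sx] sg h0 by simp
          moreover have "inner (P c \<sigma>) (S c x1) \<le> N (P c \<sigma>) * D (S c x1)" by (rule du_ineq')
          moreover have "N (P c \<sigma>) * D (S c x1) \<le> \<sigma> * D (S c x1)"
            using proj_in[OF sg, of c] du_ge0 by (intro mult_right_mono) auto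
          ultimately show ?thesis by (simp add: d_def L_def inner_diff_left algebra_simps)
        qed
        have b4: "h * M (\<sigma> + h) \<le> Dd \<sigma> - Dd (\<sigma> + h)"
          using F_low[OF sg, of "\<sigma> + h" u] h0 by (simp add: Dd_def M_def)
        have b5: "L (\<sigma> + h) \<le> M (\<sigma> + h) + L x1"
        proof -
          have "L (\<sigma> + h) \<le> D (S u (\<sigma> + h) + S c x1)"
            unfolding L_def
          proof (rule XYT[OF t])
            show "0 \<le> \<sigma> + h" using sg h0 by simp
            show "c = P u (\<sigma> + h) + (S u (\<sigma> + h) + S c x1)" by (simp add: uc shrinkX_def)
            show "N (P u (\<sigma> + h)) \<le> \<sigma> + h" using proj_in sg h0 by simp
          qed
          also have "\<dots> \<le> M (\<sigma> + h) + L x1" unfolding M_def L_def by (rule du_tri)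
          finally show ?thesis .
        qed
        have IH: "(E x2 - E \<sigma>) - (Dd x2 - Dd \<sigma>) \<le> h * (L x2 - L \<sigma>)"
          using Suc.IH kn by (simp add: \<sigma>_def)
        have "h * L (\<sigma> + h) \<le> h * (M (\<sigma> + h) + L x1)" using b5 h0 by (rule mult_left_mono)
        with b1 b2 b3 b4 IH show "(E x2 - E (x2 + real (Suc k) * h)) - (Dd x2 - Dd (x2 + real (Suc k) * h)) \<le> h * (L x2 - L (x2 + real (Suc k) * h))"
          unfolding eq by (simp add: algebra_simps inner_diff_right)
      qed
    qed
    have "x2 + real n * h = x1" using nh by simp
    moreover have "E x1 = 0" by (simp add: E_def u_def)
    moreover have "Dd x1 = 0" using proj_self[OF x1, of u] proj_in[OF x1, of c]
      by (simp add: Dd_def shrinkX_def u_def)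
    ultimately have "E x2 - Dd x2 \<le> h * (L x2 - L x1)" using ind[of n] by simp
    moreover have "h * L x1 \<ge> 0" using h0 du_ge0 by (simp add: L_def)
    ultimately have "E x2 \<le> Dd x2 + h * L x2" by (simp add: algebra_simps)
    thus "E x2 \<le> Dd x2 + (x1 - x2) * L x2 / real n" by (simp add: h_def)
  qed
  have "P u x2 = P c x2"
  proof (rule proj_uniq[OF x2])
    show "N (P c x2) \<le> x2" by (rule proj_in[OF x2])
    fix q assume q: "N q \<le> x2"
    have "norm (u - P c x2) \<le> norm (S u x2)" unfolding norm_le using key by (simp add: E_def Dd_def)
    also have "\<dots> \<le> norm (u - q)" using proj_min[OF x2 q, of u] by (simp add: shrinkX_def)
    finally show "norm (u - P c x2) \<le> norm (u - q)" .
  qed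
  thus ?thesis by (simp add: u_def)
qed

end

theorem proposition2p11:
  fixes N :: "'a::euclidean_space \<Rightarrow> real" and c :: 'a and x1 x2 :: real
  assumes "is_norm N" and "tight N c" and "x1 \<ge> 0" and "x2 \<ge> 0"
  shows "projX N (projX N c x1) x2 = projX N c (min x1 x2) \<and>
         shrinkX N (shrinkX N c x1) x2 = shrinkX N c (x1 + x2)"
proof -
  interpret nx N using assms(1) by unfold_locales
  have p1: "projX N (projX N c x1) x2 = projX N c (min x1 x2)"
  proof (cases "x1 \<le> x2")
    case True
    have "N (projX N c x1) \<le> x2" using proj_in[OF assms(3), of c] True by simp
    thus ?thesis using proj_self[OF assms(4)] True by (simp add: min_def)
  next
    case False
    thus ?thesis using part1[OF assms(2) assms(4)] by (simp add: min_def)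
  qed
  show ?thesis using p1 part2[OF assms(2) assms(3) assms(4)] by simp
qed

end
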